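(* A rooted labeled forest that avoids $123$ avoids $2413$ if and only if it is a $P_1$-forest.
   Context: Rooted labeled forests are unordered forests with a distinguished root in each component and distinct integer labels $L(v)$. The ancestors of $v$ are the vertices on the path from the root of its component to $v$ (including $v$). An instance of a pattern $\pi$ of length $k$ is a sequence $v_1,\dots,v_k$ with $v_i$ a strict ancestor of $v_{i+1}$ and labels in the same relative order as $\pi$; a forest avoids $\pi$ if it has no instance. A vertex $v$ is a top-down minimum (TDM) if $L(u)\ge L(v)$ for every ancestor $u$ of $v$; other vertices are non-TDM. A non-TDM vertex $v$ is special if the path from the root to $v$ contains vertices $v_1,v_2,v_3,v_4$ in that order (not necessarily consecutive) with $v_1,v_3$ TDM and $v_2,v_4$ non-TDM. The ceiling of a special vertex $v$ is its lowest ancestor $u$ such that the path from $u$ to $v$ contains vertices $v_1,v_2,v_3,v_4$ in that order with $v_1,v_3$ TDM and $v_2,v_4$ non-TDM. A $P_1$-forest is a forest in which every special vertex $v$ with ceiling $u$ satisfies $L(u)>L(v)$. *)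

theory Defs
  imports Main
begin

inductive anc :: "('a \<Rightarrow> 'a option) \<Rightarrow> 'a \<Rightarrow> 'a \<Rightarrow> bool" for par where
  anc_refl: "anc par v v"
| anc_step: "anc par u w \<Longrightarrow> par v = Some w \<Longrightarrow> anc par u v"

definition strict_anc :: "('a \<Rightarrow> 'a option) \<Rightarrow> 'a \<Rightarrow> 'a \<Rightarrow> bool" where
  "strict_anc par u v \<longleftrightarrow> anc par u v \<and> u \<noteq> v"

definition rooted_labeled_forest :: "'a set \<Rightarrow> ('a \<Rightarrow> 'a option) \<Rightarrow> ('a \<Rightarrow> int) \<Rightarrow> bool" where
  "rooted_labeled_forest V par L \<longleftrightarrow>
     finite V
   \<and> (\<forall>v\<in>V. \<forall>u. par v = Some u \<longrightarrow> u \<in> V)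
   \<and> (\<forall>v\<in>V. \<exists>r. anc par r v \<and> par r = None)
   \<and> inj_on L V"

definition is_instance :: "'a set \<Rightarrow> ('a \<Rightarrow> 'a option) \<Rightarrow> ('a \<Rightarrow> int) \<Rightarrow> nat list \<Rightarrow> 'a list \<Rightarrow> bool" where
  "is_instance V par L pi vs \<longleftrightarrow>
     length vs = length pi
   \<and> set vs \<subseteq> V
   \<and> (\<forall>i. Suc i < length vs \<longrightarrow> strict_anc par (vs ! i) (vs ! Suc i))
   \<and> (\<forall>i<length vs. \<forall>j<length vs. L (vs ! i) < L (vs ! j) \<longleftrightarrow> pi ! i < pi ! j)"

definition avoids :: "'a set \<Rightarrow> ('a \<Rightarrow> 'a option) \<Rightarrow> ('a \<Rightarrow> int) \<Rightarrow> nat list \<Rightarrow> bool" where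
  "avoids V par L pi \<longleftrightarrow> \<not> (\<exists>vs. is_instance V par L pi vs)"

definition tdm :: "'a set \<Rightarrow> ('a \<Rightarrow> 'a option) \<Rightarrow> ('a \<Rightarrow> int) \<Rightarrow> 'a \<Rightarrow> bool" where
  "tdm V par L v \<longleftrightarrow> v \<in> V \<and> (\<forall>u. anc par u v \<longrightarrow> L u \<ge> L v)"

definition non_tdm :: "'a set \<Rightarrow> ('a \<Rightarrow> 'a option) \<Rightarrow> ('a \<Rightarrow> int) \<Rightarrow> 'a \<Rightarrow> bool" where
  "non_tdm V par L v \<longleftrightarrow> v \<in> V \<and> \<not> tdm V par L v"

definition alt_pattern :: "'a set \<Rightarrow> ('a \<Rightarrow> 'a option) \<Rightarrow> ('a \<Rightarrow> int) \<Rightarrow> 'a \<Rightarrow> 'a \<Rightarrow> bool" where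
  "alt_pattern V par L u v \<longleftrightarrow>
     (\<exists>v1 v2 v3 v4. anc par u v1 \<and> anc par v1 v2 \<and> anc par v2 v3 \<and> anc par v3 v4 \<and> anc par v4 v
        \<and> tdm V par L v1 \<and> non_tdm V par L v2 \<and> tdm V par L v3 \<and> non_tdm V par L v4)"

definition special :: "'a set \<Rightarrow> ('a \<Rightarrow> 'a option) \<Rightarrow> ('a \<Rightarrow> int) \<Rightarrow> 'a \<Rightarrow> bool" where
  "special V par L v \<longleftrightarrow> non_tdm V par L v
     \<and> (\<exists>r. anc par r v \<and> par r = None \<and> alt_pattern V par L r v)"

definition is_ceiling :: "'a set \<Rightarrow> ('a \<Rightarrow> 'a option) \<Rightarrow> ('a \<Rightarrow> int) \<Rightarrow> 'a \<Rightarrow> 'a \<Rightarrow> bool" where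
  "is_ceiling V par L u v \<longleftrightarrow> anc par u v \<and> alt_pattern V par L u v
     \<and> (\<forall>w. anc par w v \<and> alt_pattern V par L w v \<longrightarrow> anc par w u)"

definition P1_forest :: "'a set \<Rightarrow> ('a \<Rightarrow> 'a option) \<Rightarrow> ('a \<Rightarrow> int) \<Rightarrow> bool" where
  "P1_forest V par L \<longleftrightarrow>
     (\<forall>v\<in>V. special V par L v \<longrightarrow> (\<forall>u. is_ceiling V par L u v \<longrightarrow> L u > L v))"

end

theory Submission
  imports Defs
begin

lemma anc_trans: "anc par b c \<Longrightarrow> anc par a b \<Longrightarrow> anc par a c"
  by (induction rule: anc.induct) (auto intro: anc.intros)

lemma anc_in_V:
  assumes "\<forall>v\<in>V. \<forall>u. par v = Some u \<longrightarrow> u \<in> V"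
  shows "anc par u v \<Longrightarrow> v \<in> V \<Longrightarrow> u \<in> V"
  by (induction rule: anc.induct) (use assms in auto)

lemma anc_root_noself:
  "anc par r x \<Longrightarrow> par r = None \<Longrightarrow> par x \<noteq> Some x"
  by (induction rule: anc.induct) auto

lemma anc_of_root: "anc par u r \<Longrightarrow> par r = None \<Longrightarrow> u = r"
  by (induction rule: anc.induct) auto

lemma anc_inv: "anc par u v \<Longrightarrow> u = v \<or> (\<exists>w. par v = Some w \<and> anc par u w)"
  by (induction rule: anc.induct) auto

lemma anc_antisym_aux:
  "anc par r x \<Longrightarrow> par r = None \<Longrightarrow> (\<forall>u. anc par u x \<and> anc par x u \<longrightarrow> u = x)"
proof (induction rule: anc.induct)
  case (anc_refl x)
  show ?case
  proof (intro allI impI)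
    fix u assume "anc par u x \<and> anc par x u"
    then show "u = x" using anc_of_root[of par u x] anc_refl.prems by simp
  qed
next
  case (anc_step r0 w v)
  show ?case
  proof (intro allI impI)
    fix u assume h: "anc par u v \<and> anc par v u"
    show "u = v"
    proof (rule ccontr)
      assume F: "u \<noteq> v"
      from h have "anc par u v" by simp
      then obtain w' where "par v = Some w'" "anc par u w'" using F anc_inv by metis
      then have "anc par u w" using anc_step.hyps(2) by simp
      moreover have "anc par v u" using h by simp
      ultimately have "anc par v w" by (rule anc_trans)
      moreover have "anc par w v" using anc_step.hyps(2) by (rule anc.anc_step[OF anc.anc_refl])
      ultimately have "v = w" using anc_step.IH[OF anc_step.prems, rule_format, of v] by simp
      then show False using anc_root_noself[OF anc_step.hyps(1) anc_step.prems] anc_step.hyps(2) by simp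
    qed
  qed
qed

lemma anc_antisym:
  assumes "rooted_labeled_forest V par L" "x \<in> V" "anc par u x" "anc par x u"
  shows "u = x"
proof -
  obtain r where r: "anc par r x" "par r = None" using assms(1,2) unfolding rooted_labeled_forest_def by blast
  show ?thesis by (rule anc_antisym_aux[OF r, rule_format, OF conjI[OF assms(3,4)]])
qed

lemma lowest_exists:
  "anc par a x \<Longrightarrow> Q a \<Longrightarrow> \<exists>u. anc par u x \<and> Q u \<and> (\<forall>w. anc par w x \<and> Q w \<longrightarrow> anc par w u)"
proof (induction rule: anc.induct)
  case anc_refl
  then show ?case by (metis anc.intros(1))
next
  case (anc_step a0 y x)
  show ?case
  proof (cases "Q x")
    case True
    then show ?thesis by (metis anc.intros(1))
  next
    case False
    from anc_step.IH anc_step.prems obtain u where u: "anc par u y" "Q u"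
      "\<forall>w. anc par w y \<and> Q w \<longrightarrow> anc par w u" by blast
    have "anc par w u" if "anc par w x" "Q w" for w
      using anc_inv[OF that(1)] False that(2) u anc_step.hyps(2) by auto
    then show ?thesis using u anc_step.hyps(2) by (metis anc.intros(2))
  qed
qed

lemma lt3: "i < length [a,b,c::'x] \<Longrightarrow> i = 0 \<or> i = 1 \<or> i = 2"
  by auto
lemma lt4: "i < length [a,b,c,d::'x] \<Longrightarrow> i = 0 \<or> i = 1 \<or> i = 2 \<or> i = 3"
  by (simp, presburger)

lemma inst3I:
  assumes "a \<in> V" "b \<in> V" "c \<in> V" "strict_anc par a b" "strict_anc par b c" "L a < L b" "L b < L c"
  shows "is_instance V par L [1,2,3] [a,b,c]"
  unfolding is_instance_def
proof (intro conjI allI impI)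
  show "length [a,b,c] = length [1,2,3::nat]" by simp
  show "set [a,b,c] \<subseteq> V" using assms by simp
  fix i assume "Suc i < length [a,b,c]"
  then have "i = 0 \<or> i = 1" by (simp, presburger)
  then show "strict_anc par ([a, b, c] ! i) ([a, b, c] ! Suc i)" using assms by auto
next
  fix i j assume ij: "i < length [a,b,c]" "j < length [a,b,c]"
  have "i = 0 \<or> i = 1 \<or> i = 2" using ij(1) by (simp, presburger)
  moreover have "j = 0 \<or> j = 1 \<or> j = 2" using ij(2) by (simp, presburger)
  ultimately show "(L ([a, b, c] ! i) < L ([a, b, c] ! j)) = ([1, 2, 3::nat] ! i < [1, 2, 3] ! j)"
    using assms by (elim disjE) simp_all
qed

lemma inst4I:
  assumes "a \<in> V" "b \<in> V" "c \<in> V" "d \<in> V" "strict_anc par a b" "strict_anc par b c" "strict_anc par c d"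
    "L c < L a" "L a < L d" "L d < L b"
  shows "is_instance V par L [2,4,1,3] [a,b,c,d]"
  unfolding is_instance_def
proof (intro conjI allI impI)
  show "length [a,b,c,d] = length [2,4,1,3::nat]" by simp
  show "set [a,b,c,d] \<subseteq> V" using assms by simp
  fix i assume "Suc i < length [a,b,c,d]"
  then have "i = 0 \<or> i = 1 \<or> i = 2" by (simp, presburger)
  then show "strict_anc par ([a, b, c, d] ! i) ([a, b, c, d] ! Suc i)" using assms by auto
next
  fix i j assume ij: "i < length [a,b,c,d]" "j < length [a,b,c,d]"
  have "i = 0 \<or> i = 1 \<or> i = 2 \<or> i = 3" using ij(1) by (simp, presburger)
  moreover have "j = 0 \<or> j = 1 \<or> j = 2 \<or> j = 3" using ij(2) by (simp, presburger)
  ultimately show "(L ([a, b, c, d] ! i) < L ([a, b, c, d] ! j)) = ([2, 4, 1, 3::nat] ! i < [2, 4, 1, 3] ! j)"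
    using assms by (elim disjE) simp_all
qed

lemma inst3D:
  assumes "is_instance V par L [1,2,3] vs"
  shows "\<exists>a b c. a \<in> V \<and> b \<in> V \<and> c \<in> V \<and> strict_anc par a b \<and> strict_anc par b c \<and> L a < L b \<and> L b < L c"
proof -
  have l: "length vs = 3" using assms unfolding is_instance_def by simp
  then obtain a b c where vs: "vs = [a,b,c]"
    by (cases vs; simp; rename_tac l; case_tac l; simp; rename_tac l; case_tac l; simp)
  have A: "set vs \<subseteq> V" "\<forall>i. Suc i < length vs \<longrightarrow> strict_anc par (vs ! i) (vs ! Suc i)"
    "\<forall>i<length vs. \<forall>j<length vs. L (vs ! i) < L (vs ! j) \<longleftrightarrow> [1,2,3::nat] ! i < [1,2,3] ! j"
    using assms unfolding is_instance_def by auto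
  have "strict_anc par a b" using A(2)[rule_format, of 0] vs by simp
  moreover have "strict_anc par b c" using A(2)[rule_format, of 1] vs by simp
  moreover have "L a < L b" using A(3)[rule_format, of 0 1] vs by simp
  moreover have "L b < L c" using A(3)[rule_format, of 1 2] vs by simp
  ultimately show ?thesis using A(1) vs by auto
qed

lemma inst4D:
  assumes "is_instance V par L [2,4,1,3] vs"
  shows "\<exists>a b c d. a \<in> V \<and> b \<in> V \<and> c \<in> V \<and> d \<in> V \<and> strict_anc par a b \<and> strict_anc par b c
     \<and> strict_anc par c d \<and> L c < L a \<and> L a < L d \<and> L d < L b"
proof -
  have l: "length vs = 4" using assms unfolding is_instance_def by simp
  then obtain a b c d where vs: "vs = [a,b,c,d]"
    by (cases vs; simp; rename_tac l; case_tac l; simp; rename_tac l; case_tac l; simp;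
      rename_tac l; case_tac l; simp)
  have A: "set vs \<subseteq> V" "\<forall>i. Suc i < length vs \<longrightarrow> strict_anc par (vs ! i) (vs ! Suc i)"
    "\<forall>i<length vs. \<forall>j<length vs. L (vs ! i) < L (vs ! j) \<longleftrightarrow> [2,4,1,3::nat] ! i < [2,4,1,3] ! j"
    using assms unfolding is_instance_def by auto
  have "strict_anc par a b" using A(2)[rule_format, of 0] vs by simp
  moreover have "strict_anc par b c" using A(2)[rule_format, of 1] vs by simp
  moreover have "strict_anc par c d" using A(2)[rule_format, of 2] vs by simp
  moreover have "L c < L a" using A(3)[rule_format, of 2 0] vs by simp
  moreover have "L a < L d" using A(3)[rule_format, of 0 3] vs by simp
  moreover have "L d < L b" using A(3)[rule_format, of 3 1] vs by simp
  ultimately show ?thesis using A(1) vs by auto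
qed


theorem lemma3p9:
  fixes V :: "'a set" and par :: "'a \<Rightarrow> 'a option" and L :: "'a \<Rightarrow> int"
  assumes "rooted_labeled_forest V par L"
    and "avoids V par L [1, 2, 3]"
  shows "avoids V par L [2, 4, 1, 3] \<longleftrightarrow> P1_forest V par L"
proof -
  note F = assms(1)
  have parV: "\<forall>v\<in>V. \<forall>u. par v = Some u \<longrightarrow> u \<in> V"
    and roots: "\<forall>v\<in>V. \<exists>r. anc par r v \<and> par r = None"
    and inj: "inj_on L V" using F unfolding rooted_labeled_forest_def by auto
  have no123: "\<not> is_instance V par L [1,2,3] vs" for vs
    using assms(2) unfolding avoids_def by blast
  have AV: "u \<in> V" if "anc par u v" "v \<in> V" for u v
    using anc_in_V[OF parV that] .
  have Lneq: "L x \<noteq> L y" if "x \<in> V" "y \<in> V" "x \<noteq> y" for x y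
    using inj that unfolding inj_on_def by blast
  have tdmle: "L v \<le> L u" if "tdm V par L v" "anc par u v" for u v
    using that unfolding tdm_def by blast
  have tdmV: "v \<in> V" if "tdm V par L v" for v using that unfolding tdm_def by blast
  have ntdmV: "v \<in> V" if "non_tdm V par L v" for v using that unfolding non_tdm_def by blast
  have tdm_ntdm: "u \<noteq> v" if "tdm V par L u" "non_tdm V par L v" for u v
    using that unfolding non_tdm_def by blast
  show ?thesis
  proof
    assume av: "avoids V par L [2, 4, 1, 3]"
    show "P1_forest V par L"
      unfolding P1_forest_def
    proof (intro ballI impI allI)
      fix v u assume vV: "v \<in> V" and sp: "special V par L v" and ceil: "is_ceiling V par L u v"
      have nv: "non_tdm V par L v" using sp unfolding special_def by blast
      from ceil have "alt_pattern V par L u v" unfolding is_ceiling_def by blast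
      then obtain v1 v2 v3 v4 where p: "anc par u v1" "anc par v1 v2" "anc par v2 v3" "anc par v3 v4"
        "anc par v4 v" "tdm V par L v1" "non_tdm V par L v2" "tdm V par L v3" "non_tdm V par L v4"
        unfolding alt_pattern_def by blast
      have v1V: "v1 \<in> V" using tdmV[OF p(6)] .
      have v2V: "v2 \<in> V" using ntdmV[OF p(7)] .
      have v3V: "v3 \<in> V" using tdmV[OF p(8)] .
      show "L v < L u"
      proof (rule ccontr)
        assume "\<not> L v < L u"
        then have uv: "L u \<le> L v" by simp
        have "L v1 \<le> L u" using tdmle[OF p(6) p(1)] .
        moreover have "L v1 \<noteq> L v" using Lneq[OF v1V vV tdm_ntdm[OF p(6) nv]] .
        ultimately have l1: "L v1 < L v" using uv by simp
        have n12: "v1 \<noteq> v2" using tdm_ntdm[OF p(6) p(7)] .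
        have n23: "v2 \<noteq> v3" using tdm_ntdm[OF p(8) p(7)] by metis
        have a3v: "anc par v3 v" using anc_trans[OF p(5) p(4)] .
        have n3v: "v3 \<noteq> v" using tdm_ntdm[OF p(8) nv] .
        have a13: "anc par v1 v3" using anc_trans[OF p(3) p(2)] .
        have n13: "v1 \<noteq> v3"
        proof
          assume "v1 = v3"
          then have "anc par v2 v1" using p(3) by simp
          then have "v2 = v1" using anc_antisym[OF F v1V _ p(2)] by simp
          then show False using n12 by simp
        qed
        have l2: "L v3 < L v1" using tdmle[OF p(8) a13] Lneq[OF v1V v3V n13] by simp
        have n2v: "v2 \<noteq> v"
        proof
          assume "v2 = v"
          then have "anc par v v3" using p(3) by simp
          then have "v = v3" using anc_antisym[OF F v3V _ a3v] by simp
          then show False using n3v by simp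
        qed
        have a2v: "anc par v2 v" using anc_trans[OF a3v p(3)] .
        have l3: "L v < L v2"
        proof (rule ccontr)
          assume "\<not> L v < L v2"
          then have lt: "L v2 < L v" using Lneq[OF v2V vV n2v] by simp
          from p(7) obtain m where m: "anc par m v2" "L m < L v2"
            unfolding non_tdm_def tdm_def by auto
          have mV: "m \<in> V" using AV[OF m(1) v2V] .
          have "is_instance V par L [1,2,3] [m, v2, v]"
            apply (rule inst3I[OF mV v2V vV])
            using m lt a2v n2v unfolding strict_anc_def by auto
          then show False using no123 by blast
        qed
        have "is_instance V par L [2,4,1,3] [v1, v2, v3, v]"
          apply (rule inst4I[OF v1V v2V v3V vV])
          using p(2) p(3) a3v n12 n23 n3v l1 l2 l3 unfolding strict_anc_def by auto
        then show False using av unfolding avoids_def by blast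
      qed
    qed
  next
    assume P1: "P1_forest V par L"
    show "avoids V par L [2, 4, 1, 3]"
      unfolding avoids_def
    proof
      assume "\<exists>vs. is_instance V par L [2, 4, 1, 3] vs"
      then obtain vs where "is_instance V par L [2, 4, 1, 3] vs" by blast
      from inst4D[OF this] obtain x1 x2 x3 x4 where x: "x1 \<in> V" "x2 \<in> V" "x3 \<in> V" "x4 \<in> V"
        "strict_anc par x1 x2" "strict_anc par x2 x3" "strict_anc par x3 x4"
        "L x3 < L x1" "L x1 < L x4" "L x4 < L x2" by blast
      have a12: "anc par x1 x2" and a23: "anc par x2 x3" and a34: "anc par x3 x4"
        using x(5-7) unfolding strict_anc_def by auto
      have t1: "tdm V par L x1"
        unfolding tdm_def
      proof (intro conjI allI impI)
        show "x1 \<in> V" by (rule x(1))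
        fix w assume aw: "anc par w x1"
        show "L x1 \<le> L w"
        proof (rule ccontr)
          assume "\<not> L x1 \<le> L w"
          then have lw: "L w < L x1" by simp
          have wV: "w \<in> V" using AV[OF aw x(1)] .
          have "is_instance V par L [1,2,3] [w, x1, x2]"
            apply (rule inst3I[OF wV x(1) x(2)])
            using aw lw x(5) x(9) x(10) unfolding strict_anc_def by auto
          then show False using no123 by blast
        qed
      qed
      have t3: "tdm V par L x3"
        unfolding tdm_def
      proof (intro conjI allI impI)
        show "x3 \<in> V" by (rule x(3))
        fix w assume aw: "anc par w x3"
        show "L x3 \<le> L w"
        proof (rule ccontr)
          assume "\<not> L x3 \<le> L w"
          then have lw: "L w < L x3" by simp
          have wV: "w \<in> V" using AV[OF aw x(3)] .
          have "is_instance V par L [1,2,3] [w, x3, x4]"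
            apply (rule inst3I[OF wV x(3) x(4)])
            using aw lw x(7) x(8) x(9) unfolding strict_anc_def by auto
          then show False using no123 by blast
        qed
      qed
      have n2: "non_tdm V par L x2"
        unfolding non_tdm_def tdm_def
      proof (intro conjI notI)
        show "x2 \<in> V" by (rule x(2))
        assume "x2 \<in> V \<and> (\<forall>u. anc par u x2 \<longrightarrow> L x2 \<le> L u)"
        then have "L x2 \<le> L x1" using a12 by blast
        then show False using x(9) x(10) by simp
      qed
      have n4: "non_tdm V par L x4"
        unfolding non_tdm_def tdm_def
      proof (intro conjI notI)
        show "x4 \<in> V" by (rule x(4))
        assume "x4 \<in> V \<and> (\<forall>u. anc par u x4 \<longrightarrow> L x4 \<le> L u)"
        then have "L x4 \<le> L x3" using a34 by blast
        then show False using x(8) x(9) by simp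
      qed
      have a14: "anc par x1 x4" using anc_trans[OF a34 anc_trans[OF a23 a12]] .
      have altp: "alt_pattern V par L w x4" if "anc par w x1" for w
        unfolding alt_pattern_def
        apply (rule exI[of _ x1], rule exI[of _ x2], rule exI[of _ x3], rule exI[of _ x4])
        using that a12 a23 a34 t1 n2 t3 n4 anc.anc_refl[of par x4] by simp
      obtain r where r: "anc par r x1" "par r = None" using roots x(1) by blast
      have sp: "special V par L x4"
        unfolding special_def using n4 r altp[OF r(1)] anc_trans[OF a14 r(1)] by blast
      obtain u where u: "anc par u x4" "alt_pattern V par L u x4"
        "\<forall>w. anc par w x4 \<and> alt_pattern V par L w x4 \<longrightarrow> anc par w u"
        using lowest_exists[of par x1 x4 "\<lambda>w. alt_pattern V par L w x4", OF a14 altp[OF anc.anc_refl]]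
        by blast
      have ceil: "is_ceiling V par L u x4" unfolding is_ceiling_def using u by blast
      have gt: "L x4 < L u" using P1 x(4) sp ceil unfolding P1_forest_def by blast
      from u(2) obtain w1 w2 w3 w4 where q: "anc par u w1" "anc par w1 w2" "anc par w2 w3" "anc par w3 w4"
        "anc par w4 x4" "tdm V par L w1" "non_tdm V par L w2" "tdm V par L w3" "non_tdm V par L w4"
        unfolding alt_pattern_def by blast
      have "alt_pattern V par L w1 x4"
        unfolding alt_pattern_def
        apply (rule exI[of _ w1], rule exI[of _ w2], rule exI[of _ w3], rule exI[of _ w4])
        using q(2-9) anc.anc_refl[of par w1] by simp
      moreover have "anc par w1 x4"
        using anc_trans[OF q(5) anc_trans[OF q(4) anc_trans[OF q(3) q(2)]]] .
      ultimately have "anc par w1 u" using u(3) by blast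
      then have "u = w1" using anc_antisym[OF F tdmV[OF q(6)] q(1)] by simp
      then have tu: "tdm V par L u" using q(6) by simp
      have "anc par x1 u" using u(3) a14 altp[OF anc.anc_refl] by blast
      then have "L u \<le> L x1" using tdmle[OF tu] by blast
      then show False using gt x(9) by simp
    qed
  qed
qed

end
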